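(* Let $(X,\le)$ be a non-empty strictly inductive poset, $f:X\to X$ and $a_0\in X$ with $a_0\le f(a_0)$. Let $W$ be the set of elements of $X$ that are the least upper bound of some $a_0$-chain, and let $N$ be the smallest subset of $X$ containing $a_0$, closed under $f$, and closed under non-empty least upper bounds. If $f$ is monotone on $W$ (i.e. $f(x)\le f(y)$ for all $x,y\in W$ with $x\le y$), then $N\subseteq W$.
   Context: A poset is strictly inductive if every non-empty chain has a least upper bound $\mathrm{lub}$ in $X$. A set $Z\subseteq X$ is closed under $f$ if $f(z)\in Z$ for all $z\in Z$, and closed under non-empty least upper bounds if for every non-empty $P\subseteq Z$, $\mathrm{lub}(P)$ exists and belongs to $Z$. A subset $C\subseteq X$ is an $a_0$-chain (with respect to $f$) if: $C$ is well ordered by $\le$; $a_0$ is the least element of $C$; $C$ is closed under non-empty least upper bounds; and for every $z\in C\setminus\{\mathrm{lub}(C)\}$ we have $f(z)\in C$, $z<f(z)$, and there is no $y\in C$ with $z<y<f(z)$. *)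

theory Defs
  imports Main
begin

text \<open>The poset is a carrier set X inside a type with a partial order.
  Least upper bounds are taken relative to X.\<close>

definition is_lub :: "'a::order set \<Rightarrow> 'a set \<Rightarrow> 'a \<Rightarrow> bool" where
  "is_lub X P u \<longleftrightarrow> u \<in> X \<and> (\<forall>p\<in>P. p \<le> u) \<and>
     (\<forall>y\<in>X. (\<forall>p\<in>P. p \<le> y) \<longrightarrow> u \<le> y)"

definition lub :: "'a::order set \<Rightarrow> 'a set \<Rightarrow> 'a" where
  "lub X P = (THE u. is_lub X P u)"

definition is_chain :: "'a::order set \<Rightarrow> bool" where
  "is_chain C \<longleftrightarrow> (\<forall>x\<in>C. \<forall>y\<in>C. x \<le> y \<or> y \<le> x)"

definition strictly_inductive :: "'a::order set \<Rightarrow> bool" where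
  "strictly_inductive X \<longleftrightarrow>
     (\<forall>C. C \<subseteq> X \<and> C \<noteq> {} \<and> is_chain C \<longrightarrow> (\<exists>u. is_lub X C u))"

definition closed_under :: "('a \<Rightarrow> 'a) \<Rightarrow> 'a set \<Rightarrow> bool" where
  "closed_under f Z \<longleftrightarrow> (\<forall>z\<in>Z. f z \<in> Z)"

definition closed_under_lubs :: "'a::order set \<Rightarrow> 'a set \<Rightarrow> bool" where
  "closed_under_lubs X Z \<longleftrightarrow>
     (\<forall>P. P \<subseteq> Z \<and> P \<noteq> {} \<longrightarrow> (\<exists>u. is_lub X P u) \<and> lub X P \<in> Z)"

definition well_ordered_set :: "'a::order set \<Rightarrow> bool" where
  "well_ordered_set C \<longleftrightarrow> (\<forall>S. S \<subseteq> C \<and> S \<noteq> {} \<longrightarrow> (\<exists>m\<in>S. \<forall>s\<in>S. m \<le> s))"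

definition a0_chain :: "'a::order set \<Rightarrow> ('a \<Rightarrow> 'a) \<Rightarrow> 'a \<Rightarrow> 'a set \<Rightarrow> bool" where
  "a0_chain X f a0 C \<longleftrightarrow>
     C \<subseteq> X \<and> well_ordered_set C \<and>
     a0 \<in> C \<and> (\<forall>c\<in>C. a0 \<le> c) \<and>
     closed_under_lubs X C \<and>
     (\<forall>z\<in>C - {lub X C}. f z \<in> C \<and> z < f z \<and> \<not> (\<exists>y\<in>C. z < y \<and> y < f z))"

end

theory Submission
  imports Defs
begin

lemma lub_eq: "is_lub X P u \<Longrightarrow> lub X P = u"
  unfolding lub_def
  by (rule the_equality) (auto simp: is_lub_def intro: antisym)

lemma wo_chain: "well_ordered_set C \<Longrightarrow> x\<in>C \<Longrightarrow> y\<in>C \<Longrightarrow> x \<le> y \<or> y \<le> x"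
  unfolding well_ordered_set_def
  by (erule allE[of _ "{x,y}"]) auto

lemma wo_induct:
  assumes wo: "well_ordered_set C"
    and step: "\<And>c. c\<in>C \<Longrightarrow> (\<And>c'. c'\<in>C \<Longrightarrow> c'<c \<Longrightarrow> P c') \<Longrightarrow> P c"
    and c: "c\<in>C"
  shows "P c"
proof (rule ccontr)
  assume "\<not> P c"
  let ?S = "{x\<in>C. \<not> P x}"
  have "?S \<subseteq> C" "?S \<noteq> {}" using c \<open>\<not> P c\<close> by auto
  then obtain m where m: "m \<in> ?S" "\<forall>s\<in>?S. m \<le> s" using wo unfolding well_ordered_set_def by meson
  have "P m"
  proof (rule step)
    show "m \<in> C" using m by auto
    fix c' assume "c'\<in>C" "c' < m"
    then show "P c'" using m(2) by (auto dest: leD)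
  qed
  then show False using m by auto
qed

locale ctx =
  fixes X :: "'a::order set" and f :: "'a \<Rightarrow> 'a" and a0 :: 'a
  assumes SI: "strictly_inductive X" and fX: "\<forall>x\<in>X. f x \<in> X" and a0X: "a0 \<in> X"
begin

abbreviation ch where "ch C \<equiv> a0_chain X f a0 C"

lemma ch_lub: "ch C \<Longrightarrow> P \<subseteq> C \<Longrightarrow> P \<noteq> {} \<Longrightarrow> is_lub X P (lub X P) \<and> lub X P \<in> C"
  unfolding a0_chain_def closed_under_lubs_def using lub_eq by metis

lemma ch_top: "ch C \<Longrightarrow> lub X C \<in> C \<and> (\<forall>c\<in>C. c \<le> lub X C) \<and> is_lub X C (lub X C)"
proof -
  assume "ch C"
  moreover have "C \<noteq> {}" using \<open>ch C\<close> unfolding a0_chain_def by auto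
  ultimately show ?thesis using ch_lub[of C C] unfolding is_lub_def by auto
qed

lemma ch_X: "ch C \<Longrightarrow> C \<subseteq> X" unfolding a0_chain_def by auto
lemma ch_wo: "ch C \<Longrightarrow> well_ordered_set C" unfolding a0_chain_def by auto
lemma ch_a0: "ch C \<Longrightarrow> a0 \<in> C \<and> (\<forall>c\<in>C. a0 \<le> c)" unfolding a0_chain_def by auto
lemma ch_chain: "ch C \<Longrightarrow> x\<in>C \<Longrightarrow> y\<in>C \<Longrightarrow> x \<le> y \<or> y \<le> x"
  using ch_wo wo_chain by blast

lemma ch_succ: "ch C \<Longrightarrow> z\<in>C \<Longrightarrow> z \<noteq> lub X C \<Longrightarrow> f z \<in> C \<and> z < f z \<and> (\<forall>y\<in>C. \<not>(z<y \<and> y<f z))"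
  unfolding a0_chain_def by auto

lemma struct:
  assumes C: "ch C" and c: "c \<in> C" and ne: "c \<noteq> a0"
  shows "{y\<in>C. y<c} \<noteq> {} \<and> (lub X {y\<in>C. y<c} = c \<or> (\<exists>m\<in>{y\<in>C. y<c}. (\<forall>b\<in>{y\<in>C. y<c}. b \<le> m) \<and> f m = c))"
proof -
  let ?B = "{y\<in>C. y<c}"
  have a: "a0 \<in> ?B" using ch_a0[OF C] c ne by (auto simp: order.order_iff_strict)
  hence Bne: "?B \<noteq> {}" by auto
  have l: "is_lub X ?B (lub X ?B)" "lub X ?B \<in> C" using ch_lub[OF C _ Bne] by auto
  have cX: "c \<in> X" using ch_X[OF C] c by auto
  have le: "lub X ?B \<le> c" using l(1) cX unfolding is_lub_def by auto
  show ?thesis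
  proof (cases "lub X ?B = c")
    case True then show ?thesis using Bne by auto
  next
    case False
    let ?m = "lub X ?B"
    have mB: "?m \<in> ?B" using False le l by auto
    have mmax: "\<forall>b\<in>?B. b \<le> ?m" using l(1) unfolding is_lub_def by auto
    have "?m \<noteq> lub X C" using mB ch_top[OF C] c by (metis (mono_tags, lifting) leD mem_Collect_eq)
    then have s: "f ?m \<in> C" "?m < f ?m" "\<forall>y\<in>C. \<not>(?m<y \<and> y<f ?m)" using ch_succ[OF C] mB by auto
    have "f ?m \<le> c" using ch_chain[OF C s(1) c] s(3) mB c by force
    moreover have "\<not> f ?m < c" using s mmax by (metis (mono_tags, lifting) leD mem_Collect_eq)
    ultimately have "f ?m = c" by auto
    then show ?thesis using mB mmax Bne by blast
  qed
qed

lemma key: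
  assumes C: "ch C" and D: "ch D" and c: "c \<in> C"
  shows "(c \<in> D \<and> (\<forall>y\<in>D. y \<le> c \<longrightarrow> y \<in> C) \<and> (\<forall>y\<in>C. y \<le> c \<longrightarrow> y\<in>D)) \<or> (\<forall>d\<in>D. d\<in>C \<and> d < c)"
  using ch_wo[OF C] _ c
proof (rule wo_induct)
  fix c assume c: "c \<in> C"
    and IH: "\<And>c'. c'\<in>C \<Longrightarrow> c'<c \<Longrightarrow> (c' \<in> D \<and> (\<forall>y\<in>D. y \<le> c' \<longrightarrow> y \<in> C) \<and> (\<forall>y\<in>C. y \<le> c' \<longrightarrow> y\<in>D)) \<or> (\<forall>d\<in>D. d\<in>C \<and> d < c')"
  show "(c \<in> D \<and> (\<forall>y\<in>D. y \<le> c \<longrightarrow> y \<in> C) \<and> (\<forall>y\<in>C. y \<le> c \<longrightarrow> y\<in>D)) \<or> (\<forall>d\<in>D. d\<in>C \<and> d < c)"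
  proof (cases "c = a0")
    case True
    have "\<forall>y\<in>D. y \<le> c \<longrightarrow> y \<in> C"
    proof (intro ballI impI)
      fix y assume "y \<in> D" "y \<le> c"
      then have "y = a0" using ch_a0[OF D] True by (auto intro: antisym)
      then show "y \<in> C" using ch_a0[OF C] by simp
    qed
    moreover have "\<forall>y\<in>C. y \<le> c \<longrightarrow> y \<in> D"
    proof (intro ballI impI)
      fix y assume "y \<in> C" "y \<le> c"
      then have "y = a0" using ch_a0[OF C] True by (auto intro: antisym)
      then show "y \<in> D" using ch_a0[OF D] by simp
    qed
    moreover have "c \<in> D" using ch_a0[OF D] True by simp
    ultimately show ?thesis by blast
  next
    case ne: False
    show ?thesis
    proof (cases "\<exists>c'\<in>C. c' < c \<and> (\<forall>d\<in>D. d\<in>C \<and> d < c')")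
      case True
      then obtain c' where "c'\<in>C" "c' < c" "\<forall>d\<in>D. d\<in>C \<and> d < c'" by blast
      then have "\<forall>d\<in>D. d\<in>C \<and> d < c" using less_trans by blast
      then show ?thesis by blast
    next
      case False
      then have IH1: "\<And>c'. c'\<in>C \<Longrightarrow> c'<c \<Longrightarrow> (c' \<in> D \<and> (\<forall>y\<in>D. y \<le> c' \<longrightarrow> y \<in> C) \<and> (\<forall>y\<in>C. y \<le> c' \<longrightarrow> y\<in>D))"
        using IH by blast
      let ?B = "{y\<in>C. y<c}"
      have BD: "?B \<subseteq> D" using IH1 by auto
      have Bne: "?B \<noteq> {}" using struct[OF C c ne] by auto
      have cX: "c \<in> X" using ch_X[OF C] c by auto
      from struct[OF C c ne] have "lub X ?B = c \<or> (\<exists>m\<in>?B. (\<forall>b\<in>?B. b \<le> m) \<and> f m = c)" by auto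
      then show ?thesis
      proof
        assume lb: "lub X ?B = c"
        have cD: "c \<in> D" using ch_lub[OF D BD Bne] lb by auto
        have lubB: "is_lub X ?B c" using ch_lub[OF C _ Bne] lb by auto
        have A1: "\<forall>y\<in>D. y \<le> c \<longrightarrow> y \<in> C"
        proof (intro ballI impI)
          fix y assume y: "y \<in> D" "y \<le> c"
          show "y \<in> C"
          proof (cases "y = c")
            case True then show ?thesis using c by auto
          next
            case False
            have yX: "y \<in> X" using ch_X[OF D] y by auto
            have "\<not> (\<forall>b\<in>?B. b \<le> y)"
            proof
              assume "\<forall>b\<in>?B. b \<le> y"
              then have "c \<le> y" using lubB yX unfolding is_lub_def by blast
              then show False using y False by auto
            qed
            then obtain b where b: "b \<in> ?B" "\<not> b \<le> y" by blast
            have "y \<le> b" using ch_chain[OF D] b BD y by blast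
            then show ?thesis using IH1[of b] b y by auto
          qed
        qed
        have A2: "\<forall>y\<in>C. y \<le> c \<longrightarrow> y\<in>D" using cD BD by (auto simp: order.order_iff_strict)
        show ?thesis using cD A1 A2 by auto
      next
        assume "\<exists>m\<in>?B. (\<forall>b\<in>?B. b \<le> m) \<and> f m = c"
        then obtain m where m: "m \<in> ?B" "\<forall>b\<in>?B. b \<le> m" "f m = c" by blast
        have Im: "m \<in> D" "\<forall>y\<in>D. y \<le> m \<longrightarrow> y \<in> C" "\<forall>y\<in>C. y \<le> m \<longrightarrow> y\<in>D" using IH1[of m] m by auto
        show ?thesis
        proof (cases "m = lub X D")
          case True
          then have "\<forall>d\<in>D. d \<le> m" using ch_top[OF D] by auto
          then have "\<forall>d\<in>D. d\<in>C \<and> d < c" using Im m by (auto intro: le_less_trans)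
          then show ?thesis by auto
        next
          case False
          note s = ch_succ[OF D Im(1) False]
          have cD: "c \<in> D" using s m by auto
          have A1: "\<forall>y\<in>D. y \<le> c \<longrightarrow> y \<in> C"
          proof (intro ballI impI)
            fix y assume y: "y \<in> D" "y \<le> c"
            from ch_chain[OF D y(1) Im(1)] show "y \<in> C"
            proof
              assume "y \<le> m" then show ?thesis using Im y by auto
            next
              assume "m \<le> y"
              show ?thesis
              proof (cases "y = m \<or> y = c")
                case True then show ?thesis using c m by auto
              next
                case False
                then have "m < y" "y < f m" using \<open>m \<le> y\<close> y m by auto
                then show ?thesis using s y by blast
              qed
            qed
          qed
          have A2: "\<forall>y\<in>C. y \<le> c \<longrightarrow> y\<in>D"
          proof (intro ballI impI)
            fix y assume y: "y \<in> C" "y \<le> c"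
            show "y \<in> D"
            proof (cases "y = c")
              case True then show ?thesis using cD by auto
            next
              case False then have "y \<in> ?B" using y by auto
              then show ?thesis using m Im by auto
            qed
          qed
          show ?thesis using cD A1 A2 by auto
        qed
      qed
    qed
  qed
qed

definition seg where "seg C D \<longleftrightarrow> C \<subseteq> D \<and> (\<forall>d\<in>D. \<forall>c\<in>C. d \<le> c \<longrightarrow> d \<in> C)"

lemma compar:
  assumes C: "ch C" and D: "ch D"
  shows "seg C D \<or> seg D C"
proof (cases "\<forall>c\<in>C. c \<in> D \<and> (\<forall>y\<in>D. y \<le> c \<longrightarrow> y \<in> C)")
  case True
  then have "seg C D" unfolding seg_def by blast
  then show ?thesis by (rule disjI1)
next
  case False
  then obtain c where c0: "c \<in> C" "\<not> (c \<in> D \<and> (\<forall>y\<in>D. y \<le> c \<longrightarrow> y \<in> C))"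
    by blast
  have k1: "\<forall>d\<in>D. d\<in>C \<and> d < c"
  proof -
    have "(c \<in> D \<and> (\<forall>y\<in>D. y \<le> c \<longrightarrow> y \<in> C) \<and> (\<forall>y\<in>C. y \<le> c \<longrightarrow> y\<in>D)) \<or> (\<forall>d\<in>D. d\<in>C \<and> d < c)"
      by (rule key[OF C D c0(1)])
    then show ?thesis using c0(2) by (elim disjE) simp_all
  qed
  show ?thesis
  proof (cases "\<forall>d\<in>D. d \<in> C \<and> (\<forall>y\<in>C. y \<le> d \<longrightarrow> y \<in> D)")
    case True
    then have "seg D C" unfolding seg_def by blast
    then show ?thesis by (rule disjI2)
  next
    case False
    then obtain d where d0: "d \<in> D" "\<not> (d \<in> C \<and> (\<forall>y\<in>C. y \<le> d \<longrightarrow> y \<in> D))"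
      by blast
    have k2: "\<forall>x\<in>C. x\<in>D \<and> x < d"
    proof -
      have "(d \<in> C \<and> (\<forall>y\<in>C. y \<le> d \<longrightarrow> y \<in> D) \<and> (\<forall>y\<in>D. y \<le> d \<longrightarrow> y\<in>C)) \<or> (\<forall>x\<in>C. x\<in>D \<and> x < d)"
        by (rule key[OF D C d0(1)])
      then show ?thesis using d0(2) by (elim disjE) simp_all
    qed
    have "c < d" using k2 c0(1) by simp
    moreover have "d < c" using k1 d0(1) by simp
    ultimately show ?thesis by simp
  qed
qed

lemma ch_single: "ch {a0}"
proof -
  have il: "is_lub X {a0} a0" using a0X unfolding is_lub_def by auto
  then have l: "lub X {a0} = a0" by (rule lub_eq)
  have wo: "well_ordered_set {a0}" unfolding well_ordered_set_def
  proof (intro allI impI)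
    fix S :: "'a set" assume "S \<subseteq> {a0} \<and> S \<noteq> {}"
    then have "S = {a0}" by blast
    then show "\<exists>m\<in>S. \<forall>s\<in>S. m \<le> s" by simp
  qed
  have cl: "closed_under_lubs X {a0}" unfolding closed_under_lubs_def
  proof (intro allI impI)
    fix S :: "'a set" assume "S \<subseteq> {a0} \<and> S \<noteq> {}"
    then have "S = {a0}" by blast
    then show "(\<exists>u. is_lub X S u) \<and> lub X S \<in> {a0}" using il l by (intro conjI exI[of _ a0]) simp_all
  qed
  have sc: "{a0} - {lub X {a0}} = {}" using l by simp
  show ?thesis unfolding a0_chain_def
    using a0X wo cl sc by simp
qed

definition M where "M = \<Union>{C. ch C}"

lemma M_chain: "x \<in> M \<Longrightarrow> y \<in> M \<Longrightarrow> x \<le> y \<or> y \<le> x"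
proof -
  assume "x \<in> M" "y \<in> M"
  then obtain C D where CD: "ch C" "x \<in> C" "ch D" "y \<in> D" unfolding M_def by auto
  from compar[OF CD(1) CD(3)] show ?thesis
  proof
    assume "seg C D" then have "x \<in> D" using CD unfolding seg_def by auto
    then show ?thesis using ch_chain[OF CD(3) _ CD(4)] by simp
  next
    assume "seg D C" then have "y \<in> C" using CD unfolding seg_def by auto
    then show ?thesis using ch_chain[OF CD(1) CD(2)] by simp
  qed
qed

lemma M_X: "M \<subseteq> X" unfolding M_def using ch_X by auto

lemma M_ne: "a0 \<in> M" unfolding M_def using ch_single by auto

lemma chain_lub_ex: "P \<subseteq> X \<Longrightarrow> P \<noteq> {} \<Longrightarrow> (\<And>x y. x\<in>P \<Longrightarrow> y\<in>P \<Longrightarrow> x \<le> y \<or> y \<le> x) \<Longrightarrow> is_lub X P (lub X P)"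
proof -
  assume "P \<subseteq> X" "P \<noteq> {}" "(\<And>x y. x\<in>P \<Longrightarrow> y\<in>P \<Longrightarrow> x \<le> y \<or> y \<le> x)"
  then have "is_chain P" unfolding is_chain_def by blast
  then obtain u where "is_lub X P u" using SI \<open>P \<subseteq> X\<close> \<open>P \<noteq> {}\<close> unfolding strictly_inductive_def by blast
  then show ?thesis using lub_eq[of X P u] by simp
qed

lemma M_ch: "ch M"
proof -
  let ?u = "lub X M"
  have Mne: "M \<noteq> {}" using M_ne by blast
  have ulub: "is_lub X M ?u" by (rule chain_lub_ex[OF M_X Mne M_chain])
  have uX: "?u \<in> X" and uup: "\<forall>c\<in>M. c \<le> ?u" using ulub unfolding is_lub_def by auto
  let ?E = "insert ?u M"
  have EX: "?E \<subseteq> X" using uX M_X by auto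
  have Echain: "\<And>x y. x\<in>?E \<Longrightarrow> y\<in>?E \<Longrightarrow> x \<le> y \<or> y \<le> x"
  proof -
    fix x y assume x: "x\<in>?E" and y: "y\<in>?E"
    show "x \<le> y \<or> y \<le> x"
    proof (cases "x = ?u")
      case True then show ?thesis using y uup by auto
    next
      case False
      then have xM: "x \<in> M" using x by simp
      show ?thesis
      proof (cases "y = ?u")
        case True then show ?thesis using xM uup by auto
      next
        case False
        then have "y \<in> M" using y by simp
        then show ?thesis using M_chain xM by blast
      qed
    qed
  qed
  have Elub: "is_lub X ?E ?u" using ulub unfolding is_lub_def by auto
  hence lubE: "lub X ?E = ?u" by (rule lub_eq)
  have wo: "well_ordered_set ?E"
    unfolding well_ordered_set_def
  proof (intro allI impI)
    fix S assume S: "S \<subseteq> ?E \<and> S \<noteq> {}"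
    show "\<exists>m\<in>S. \<forall>s\<in>S. m \<le> s"
    proof (cases "S \<inter> M = {}")
      case True
      then have "S = {?u}" using S by auto
      then show ?thesis by auto
    next
      case False
      then obtain s0 C where s0: "s0 \<in> S" "s0 \<in> C" "ch C" unfolding M_def by blast
      have "S \<inter> C \<subseteq> C \<and> S \<inter> C \<noteq> {}" using s0 by blast
      then obtain m where m: "m \<in> S \<inter> C" "\<forall>s\<in>S\<inter>C. m \<le> s"
        using ch_wo[OF s0(3)] unfolding well_ordered_set_def by blast
      have "\<forall>s\<in>S. m \<le> s"
      proof
        fix s assume s: "s \<in> S"
        show "m \<le> s"
        proof (cases "s = ?u")
          case True
          have "m \<in> M" using m(1) s0(3) unfolding M_def by blast
          then show ?thesis using uup True by simp
        next
          case False
          then obtain D where D: "ch D" "s \<in> D" using s S unfolding M_def by blast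
          from compar[OF s0(3) D(1)] show ?thesis
          proof
            assume sg: "seg C D"
            have mD: "m \<in> D" using sg m(1) unfolding seg_def by blast
            from ch_chain[OF D(1) mD D(2)] show ?thesis
            proof
              assume "m \<le> s" then show ?thesis .
            next
              assume "s \<le> m"
              then have "s \<in> C" using sg D(2) m(1) unfolding seg_def by blast
              then show ?thesis using m(2) s by blast
            qed
          next
            assume "seg D C" then have "s \<in> C" using D(2) unfolding seg_def by blast
            then show ?thesis using m(2) s by blast
          qed
        qed
      qed
      then show ?thesis using m by auto
    qed
  qed
  have a0E: "a0 \<in> ?E \<and> (\<forall>c\<in>?E. a0 \<le> c)"
  proof
    show "a0 \<in> ?E" using M_ne by simp
    show "\<forall>c\<in>?E. a0 \<le> c"
    proof
      fix c assume c: "c \<in> ?E"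
      have a0u: "a0 \<le> ?u" using uup M_ne by blast
      show "a0 \<le> c"
      proof (cases "c = ?u")
        case True then show ?thesis using a0u by simp
      next
        case False
        then obtain C where "ch C" "c \<in> C" using c unfolding M_def by blast
        then show ?thesis using ch_a0 by blast
      qed
    qed
  qed
  have clE: "closed_under_lubs X ?E"
    unfolding closed_under_lubs_def
  proof (intro allI impI)
    fix Q assume Q: "Q \<subseteq> ?E \<and> Q \<noteq> {}"
    have QX: "Q \<subseteq> X" using Q EX by blast
    have Qc: "\<And>x y. x\<in>Q \<Longrightarrow> y\<in>Q \<Longrightarrow> x \<le> y \<or> y \<le> x"
    proof -
      fix x y assume "x\<in>Q" "y\<in>Q"
      then have "x \<in> ?E" "y \<in> ?E" using Q by blast+
      then show "x \<le> y \<or> y \<le> x" by (rule Echain)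
    qed
    have Qne: "Q \<noteq> {}" using Q by blast
    have Ql: "is_lub X Q (lub X Q)" by (rule chain_lub_ex[OF QX Qne Qc])
    have "lub X Q \<in> ?E"
    proof (cases "?u \<in> Q")
      case True
      have up: "\<forall>p\<in>Q. p \<le> ?u"
      proof
        fix p assume "p \<in> Q"
        then have "p \<in> ?E" using Q by blast
        then show "p \<le> ?u" using uup by blast
      qed
      have "is_lub X Q ?u" unfolding is_lub_def using True uX up by blast
      then have "lub X Q = ?u" by (rule lub_eq)
      then show ?thesis by simp
    next
      case False
      hence QM: "Q \<subseteq> M" using Q by auto
      show ?thesis
      proof (cases "\<forall>c\<in>M. c \<le> lub X Q")
        case True
        have lX: "lub X Q \<in> X" using Ql unfolding is_lub_def by blast
        have "?u \<le> lub X Q" using ulub lX True unfolding is_lub_def by blast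
        moreover have "lub X Q \<le> ?u"
        proof -
          have "\<forall>p\<in>Q. p \<le> ?u" using QM uup by blast
          then show ?thesis using Ql uX unfolding is_lub_def by blast
        qed
        ultimately have "lub X Q = ?u" by (rule antisym[rotated])
        then show ?thesis by simp
      next
        case False
        then obtain c C where c: "c \<in> C" "ch C" "\<not> c \<le> lub X Q" unfolding M_def by blast
        have "Q \<subseteq> C"
        proof
          fix q assume q: "q \<in> Q"
          have ql: "q \<le> lub X Q" using Ql q unfolding is_lub_def by blast
          have "\<not> c \<le> q"
          proof
            assume "c \<le> q"
            then have "c \<le> lub X Q" using ql by (rule order_trans)
            then show False using c(3) by simp
          qed
          moreover have "q \<in> M" using q QM by blast
          moreover have "c \<in> M" using c(1,2) unfolding M_def by blast
          ultimately have qc: "q \<le> c" using M_chain by blast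
          obtain D where D: "ch D" "q \<in> D" using q QM unfolding M_def by blast
          from compar[OF c(2) D(1)] show "q \<in> C"
          proof
            assume "seg C D" then show "q \<in> C" using qc D(2) c(1) unfolding seg_def by blast
          next
            assume "seg D C" then show "q \<in> C" using D(2) unfolding seg_def by blast
          qed
        qed
        then have "lub X Q \<in> C" using ch_lub[OF c(2) _ Qne] by blast
        then show ?thesis using c unfolding M_def by blast
      qed
    qed
    then show "(\<exists>u. is_lub X Q u) \<and> lub X Q \<in> ?E" using Ql by auto
  qed
  have succ: "\<forall>z\<in>?E - {lub X ?E}. f z \<in> ?E \<and> z < f z \<and> \<not> (\<exists>y\<in>?E. z < y \<and> y < f z)"
  proof
    fix z assume z: "z \<in> ?E - {lub X ?E}"
    hence zM: "z \<in> M" and zu: "z \<noteq> ?u" using lubE by auto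
    have "\<exists>D. ch D \<and> z \<in> D \<and> z \<noteq> lub X D"
    proof -
      obtain C where C: "ch C" "z \<in> C" using zM unfolding M_def by blast
      show ?thesis
      proof (cases "z = lub X C")
        case False then show ?thesis using C by auto
      next
        case True
        have "\<not> (\<forall>c\<in>M. c \<le> z)"
        proof
          assume "\<forall>c\<in>M. c \<le> z"
          moreover have "z \<in> X" using zM M_X by blast
          ultimately have "?u \<le> z" using ulub unfolding is_lub_def by blast
          moreover have "z \<le> ?u" using uup zM by blast
          ultimately have "z = ?u" by (rule antisym[rotated])
          then show False using zu by simp
        qed
        then obtain c' D where D: "ch D" "c' \<in> D" "\<not> c' \<le> z" unfolding M_def by blast
        from compar[OF C(1) D(1)] show ?thesis
        proof
          assume "seg C D"
          then have "z \<in> D" using C(2) unfolding seg_def by blast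
          moreover have "z \<noteq> lub X D"
          proof
            assume "z = lub X D"
            then have "c' \<le> z" using ch_top[OF D(1)] D(2) by simp
            then show False using D(3) by simp
          qed
          ultimately show ?thesis using D(1) by blast
        next
          assume "seg D C"
          then have "c' \<in> C" using D(2) unfolding seg_def by blast
          then have "c' \<le> z" using True ch_top[OF C(1)] by simp
          then show ?thesis using D(3) by simp
        qed
      qed
    qed
    then obtain D where D: "ch D" "z \<in> D" "z \<noteq> lub X D" by blast
    note s = ch_succ[OF D]
    have fzM: "f z \<in> M" using s D unfolding M_def by blast
    have "\<not> (\<exists>y\<in>?E. z < y \<and> y < f z)"
    proof
      assume "\<exists>y\<in>?E. z < y \<and> y < f z"
      then obtain y where y: "y \<in> ?E" "z < y" "y < f z" by blast
      show False
      proof (cases "y = ?u")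
        case True
        have "f z \<le> ?u" using fzM uup by blast
        then show ?thesis using y(3) True by simp
      next
        case False
        then obtain D' where D': "ch D'" "y \<in> D'" using y unfolding M_def by blast
        from compar[OF D(1) D'(1)] have "y \<in> D"
        proof
          assume "seg D D'" then show "y \<in> D" using D'(2) y(3) s unfolding seg_def
            by (meson less_imp_le)
        next
          assume "seg D' D" then show "y \<in> D" using D'(2) unfolding seg_def by blast
        qed
        then show ?thesis using s y(2,3) by blast
      qed
    qed
    then show "f z \<in> ?E \<and> z < f z \<and> \<not> (\<exists>y\<in>?E. z < y \<and> y < f z)" using fzM s by simp
  qed
  have a0E1: "a0 \<in> ?E" and a0E2: "\<forall>c\<in>?E. a0 \<le> c" using a0E by blast+
  have chE: "ch ?E" unfolding a0_chain_def
    using EX wo a0E1 a0E2 clE succ by (intro conjI) assumption+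
  then have "?E \<in> {C. ch C}" by simp
  then have "?E \<subseteq> \<Union>{C. ch C}" by (rule Union_upper)
  then have "?E \<subseteq> M" by (simp add: M_def)
  then have "?E = M" by blast
  then show ?thesis using chE by simp
qed

lemma seg_ch:
  assumes C: "ch C" and c: "c \<in> C"
  shows "ch {y\<in>C. y \<le> c} \<and> lub X {y\<in>C. y \<le> c} = c"
proof -
  let ?S = "{y\<in>C. y \<le> c}"
  have cX: "c \<in> X" using c ch_X[OF C] by blast
  have il: "is_lub X ?S c" using cX c unfolding is_lub_def by blast
  hence l: "lub X ?S = c" by (rule lub_eq)
  have SX: "?S \<subseteq> X" using ch_X[OF C] by blast
  have wo: "well_ordered_set ?S" unfolding well_ordered_set_def
  proof (intro allI impI)
    fix T assume T: "T \<subseteq> ?S \<and> T \<noteq> {}"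
    then have "T \<subseteq> C \<and> T \<noteq> {}" by blast
    then show "\<exists>m\<in>T. \<forall>s\<in>T. m \<le> s" using ch_wo[OF C] unfolding well_ordered_set_def by blast
  qed
  have a01: "a0 \<in> ?S" using ch_a0[OF C] c by blast
  have a02: "\<forall>y\<in>?S. a0 \<le> y" using ch_a0[OF C] by blast
  have cl: "closed_under_lubs X ?S" unfolding closed_under_lubs_def
  proof (intro allI impI)
    fix Q assume Q: "Q \<subseteq> ?S \<and> Q \<noteq> {}"
    then have QC: "Q \<subseteq> C" and Qne: "Q \<noteq> {}" by blast+
    have il: "is_lub X Q (lub X Q)" and lC: "lub X Q \<in> C" using ch_lub[OF C QC Qne] by blast+
    have "\<forall>q\<in>Q. q \<le> c" using Q by blast
    then have "lub X Q \<le> c" using cX il unfolding is_lub_def by blast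
    then show "(\<exists>u. is_lub X Q u) \<and> lub X Q \<in> ?S" using il lC by blast
  qed
  have succ: "\<forall>z\<in>?S - {lub X ?S}. f z \<in> ?S \<and> z < f z \<and> \<not> (\<exists>y\<in>?S. z < y \<and> y < f z)"
  proof
    fix z assume z: "z \<in> ?S - {lub X ?S}"
    hence zc: "z < c" "z \<in> C" using l by auto
    have "z \<noteq> lub X C"
    proof
      assume "z = lub X C"
      then have "c \<le> z" using ch_top[OF C] c by simp
      then show False using zc(1) by simp
    qed
    then have s1: "f z \<in> C" and s2: "z < f z" and s3: "\<forall>y\<in>C. \<not>(z<y \<and> y<f z)"
      using ch_succ[OF C zc(2)] by blast+
    have "f z \<le> c"
    proof (rule ccontr)
      assume "\<not> f z \<le> c"
      then have "c < f z" using ch_chain[OF C s1 c] by (simp add: less_le_not_le)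
      then show False using s3 c zc(1) by blast
    qed
    then have "f z \<in> ?S" using s1 by blast
    moreover have "\<not> (\<exists>y\<in>?S. z < y \<and> y < f z)" using s3 by blast
    ultimately show "f z \<in> ?S \<and> z < f z \<and> \<not> (\<exists>y\<in>?S. z < y \<and> y < f z)" using s2 by blast
  qed
  have "ch ?S" unfolding a0_chain_def
    using SX wo a01 a02 cl succ by (intro conjI) assumption+
  then show ?thesis using l by blast
qed

lemma ext_ch:
  assumes C: "ch C" and w: "w = lub X C" and lt: "w < f w"
  shows "ch (insert (f w) C)"
proof -
  let ?E = "insert (f w) C"
  have top1: "w \<in> C" and top2: "\<forall>c\<in>C. c \<le> w" using ch_top[OF C] w by blast+
  have fwX: "f w \<in> X" using fX top1 ch_X[OF C] by blast
  have EX: "?E \<subseteq> X" using fwX ch_X[OF C] by blast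
  have up: "\<forall>c\<in>?E. c \<le> f w"
  proof
    fix c assume "c \<in> ?E"
    then show "c \<le> f w"
    proof
      assume "c \<in> C" then have "c \<le> w" using top2 by blast
      then show ?thesis using lt by simp
    qed simp
  qed
  have il: "is_lub X ?E (f w)" using fwX up unfolding is_lub_def by blast
  hence l: "lub X ?E = f w" by (rule lub_eq)
  have wo: "well_ordered_set ?E" unfolding well_ordered_set_def
  proof (intro allI impI)
    fix S assume S: "S \<subseteq> ?E \<and> S \<noteq> {}"
    show "\<exists>m\<in>S. \<forall>s\<in>S. m \<le> s"
    proof (cases "S \<inter> C = {}")
      case True then have "S = {f w}" using S by blast
      then show ?thesis by simp
    next
      case False
      then have "S \<inter> C \<subseteq> C \<and> S \<inter> C \<noteq> {}" by blast
      then obtain m where m: "m \<in> S \<inter> C" "\<forall>s\<in>S\<inter>C. m \<le> s"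
        using ch_wo[OF C] unfolding well_ordered_set_def by blast
      have "\<forall>s\<in>S. m \<le> s"
      proof
        fix s assume s: "s \<in> S"
        show "m \<le> s"
        proof (cases "s \<in> C")
          case True then show ?thesis using m s by blast
        next
          case False then have "s = f w" using S s by blast
          then show ?thesis using up m(1) S by blast
        qed
      qed
      then show ?thesis using m by blast
    qed
  qed
  have a01: "a0 \<in> ?E" using ch_a0[OF C] by blast
  have a02: "\<forall>c\<in>?E. a0 \<le> c"
  proof
    fix c assume "c \<in> ?E"
    then show "a0 \<le> c"
    proof
      assume "c = f w"
      have "a0 \<le> w" using ch_a0[OF C] top1 by blast
      then show ?thesis using lt \<open>c = f w\<close> by simp
    next
      assume "c \<in> C" then show ?thesis using ch_a0[OF C] by blast
    qed
  qed
  have cl: "closed_under_lubs X ?E" unfolding closed_under_lubs_def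
  proof (intro allI impI)
    fix Q assume Q: "Q \<subseteq> ?E \<and> Q \<noteq> {}"
    show "(\<exists>u. is_lub X Q u) \<and> lub X Q \<in> ?E"
    proof (cases "f w \<in> Q")
      case True
      have "\<forall>q\<in>Q. q \<le> f w" using Q up by blast
      then have "is_lub X Q (f w)" using True fwX unfolding is_lub_def by blast
      moreover then have "lub X Q = f w" by (rule lub_eq)
      ultimately show ?thesis by blast
    next
      case False
      then have QC: "Q \<subseteq> C" using Q by blast
      have Qne: "Q \<noteq> {}" using Q by blast
      show ?thesis using ch_lub[OF C QC Qne] by blast
    qed
  qed
  have succ: "\<forall>z\<in>?E - {lub X ?E}. f z \<in> ?E \<and> z < f z \<and> \<not> (\<exists>y\<in>?E. z < y \<and> y < f z)"
  proof
    fix z assume z: "z \<in> ?E - {lub X ?E}"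
    hence zC: "z \<in> C" using l by auto
    show "f z \<in> ?E \<and> z < f z \<and> \<not> (\<exists>y\<in>?E. z < y \<and> y < f z)"
    proof (cases "z = w")
      case True
      have "\<not> (\<exists>y\<in>?E. z < y \<and> y < f z)"
      proof
        assume "\<exists>y\<in>?E. z < y \<and> y < f z"
        then obtain y where y: "y \<in> ?E" "z < y" "y < f z" by blast
        show False
        proof (cases "y \<in> C")
          case True then have "y \<le> w" using top2 by blast
          then show False using y(2) \<open>z = w\<close> by simp
        next
          case False then have "y = f w" using y(1) by blast
          then show False using y(3) \<open>z = w\<close> by simp
        qed
      qed
      then show ?thesis using lt True by simp
    next
      case False
      then have zl: "z \<noteq> lub X C" using w by simp
      have s1: "f z \<in> C" and s2: "z < f z" and s3: "\<forall>y\<in>C. \<not>(z<y \<and> y<f z)"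
        using ch_succ[OF C zC zl] by blast+
      have fzw: "f z \<le> w" using top2 s1 by blast
      have "\<not> (\<exists>y\<in>?E. z < y \<and> y < f z)"
      proof
        assume "\<exists>y\<in>?E. z < y \<and> y < f z"
        then obtain y where y: "y \<in> ?E" "z < y" "y < f z" by blast
        show False
        proof (cases "y \<in> C")
          case True then show False using s3 y by blast
        next
          case False then have "y = f w" using y(1) by blast
          then have "f w < w" using y(3) fzw by (rule_tac less_le_trans) simp_all
          then show False using lt by simp
        qed
      qed
      then show ?thesis using s1 s2 by blast
    qed
  qed
  show ?thesis unfolding a0_chain_def
    using EX wo a01 a02 cl succ by (intro conjI) assumption+
qed
end

theorem mainTheorem5:
  fixes X :: "'a::order set" and f :: "'a \<Rightarrow> 'a" and a0 :: 'a and N W :: "'a set"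
  assumes "X \<noteq> {}"
    and "strictly_inductive X"
    and "\<forall>x\<in>X. f x \<in> X"
    and "a0 \<in> X"
    and "a0 \<le> f a0"
    and "W = {x \<in> X. \<exists>C. a0_chain X f a0 C \<and> x = lub X C}"
    and "N \<subseteq> X" and "a0 \<in> N" and "closed_under f N" and "closed_under_lubs X N"
    and "\<forall>Z. Z \<subseteq> X \<and> a0 \<in> Z \<and> closed_under f Z \<and> closed_under_lubs X Z \<longrightarrow> N \<subseteq> Z"
    and "\<forall>x\<in>W. \<forall>y\<in>W. x \<le> y \<longrightarrow> f x \<le> f y"
  shows "N \<subseteq> W"
proof -
  interpret ctx X f a0 using assms(2,3,4) by unfold_locales
  have MW: "M \<subseteq> W"
  proof
    fix c assume "c \<in> M"
    then obtain C where C: "ch C" "c \<in> C" unfolding M_def by blast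
    have sg: "ch {y\<in>C. y \<le> c}" "lub X {y\<in>C. y \<le> c} = c" using seg_ch[OF C] by blast+
    have "c \<in> X" using C ch_X by blast
    then show "c \<in> W" unfolding assms(6) using sg by (intro CollectI conjI exI[of _ "{y\<in>C. y \<le> c}"]) simp_all
  qed
  have mono: "\<And>x y. x \<in> M \<Longrightarrow> y \<in> M \<Longrightarrow> x \<le> y \<Longrightarrow> f x \<le> f y"
  proof -
    fix x y assume "x \<in> M" "y \<in> M" "x \<le> y"
    then have "x \<in> W" "y \<in> W" using MW by blast+
    then show "f x \<le> f y" using assms(12) \<open>x \<le> y\<close> by blast
  qed
  have wM: "lub X M \<in> M" and wup: "\<forall>c\<in>M. c \<le> lub X M" using ch_top[OF M_ch] by blast+
  have cf: "closed_under f M" unfolding closed_under_def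
  proof
    fix z assume zM: "z \<in> M"
    show "f z \<in> M"
    proof (cases "z = lub X M")
      case False then show ?thesis using ch_succ[OF M_ch zM False] by blast
    next
      case True
      let ?w = "lub X M"
      have wX: "?w \<in> X" using wM M_X by blast
      have fwX: "f ?w \<in> X" using wX assms(3) by blast
      have le: "?w \<le> f ?w"
      proof (cases "?w = a0")
        case True then show ?thesis using assms(5) by simp
      next
        case ne: False
        have st: "{y\<in>M. y < ?w} \<noteq> {}"
          "lub X {y\<in>M. y < ?w} = ?w \<or> (\<exists>m\<in>{y\<in>M. y < ?w}. (\<forall>b\<in>{y\<in>M. y < ?w}. b \<le> m) \<and> f m = ?w)"
          using struct[OF M_ch wM ne] by blast+
        from st(2) show ?thesis
        proof
          assume lb: "lub X {y\<in>M. y < ?w} = ?w"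
          have BM: "{y\<in>M. y < ?w} \<subseteq> M" by blast
          have il: "is_lub X {y\<in>M. y < ?w} ?w" using ch_lub[OF M_ch BM st(1)] lb by simp
          have "\<forall>b\<in>{y\<in>M. y < ?w}. b \<le> f ?w"
          proof
            fix b assume b: "b \<in> {y\<in>M. y < ?w}"
            then have bM: "b \<in> M" and bw: "b < ?w" by blast+
            then have bne: "b \<noteq> ?w" by simp
            have "b < f b" using ch_succ[OF M_ch bM bne] by blast
            moreover have "f b \<le> f ?w" using mono[OF bM wM] bw by simp
            ultimately show "b \<le> f ?w" by simp
          qed
          then show ?thesis using il fwX unfolding is_lub_def by blast
        next
          assume "\<exists>m\<in>{y\<in>M. y < ?w}. (\<forall>b\<in>{y\<in>M. y < ?w}. b \<le> m) \<and> f m = ?w"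
          then obtain m where m: "m \<in> M" "m < ?w" "f m = ?w" by blast
          have "f m \<le> f ?w" using mono[OF m(1) wM] m(2) by simp
          then show ?thesis using m(3) by simp
        qed
      qed
      show ?thesis
      proof (cases "?w = f ?w")
        case True then show ?thesis using \<open>z = ?w\<close> zM by simp
      next
        case False
        then have "?w < f ?w" using le by simp
        then have "ch (insert (f ?w) M)" using ext_ch[OF M_ch refl] by blast
        then have "insert (f ?w) M \<in> {C. ch C}" by simp
        then have "insert (f ?w) M \<subseteq> \<Union>{C. ch C}" by (rule Union_upper)
        then have "f ?w \<in> M" by (simp add: M_def)
        then show ?thesis using \<open>z = ?w\<close> by simp
      qed
    qed
  qed
  have clM: "closed_under_lubs X M" using M_ch unfolding a0_chain_def by blast
  have "N \<subseteq> M" using assms(11) M_X M_ne cf clM by blast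
  then show ?thesis using MW by blast
qed

end
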